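(* Let $\widetilde C$ be an $\mathcal S$-complex over $R$. Then $H_\ast(\Sigma\widetilde C)\cong H_\ast(\widetilde C)$, where $H_\ast$ denotes the homology of the underlying chain complex.
   Context: Let $R$ be a commutative ring; graded modules are $\mathbb Z$-graded, $V[i]_j=V_{i+j}$, differentials have degree $-1$. An $\mathcal S$-complex over $R$ is a chain complex $(\widetilde C,\widetilde d)$ of finitely generated free graded $R$-modules with a graded decomposition $\widetilde C=C\oplus C[-1]\oplus\mathsf R$ in which $\widetilde d=\begin{pmatrix} d&0&0\\ v&-d&\delta_2\\ \delta_1&0&r\end{pmatrix}$. The suspension $\Sigma\widetilde C$ is the chain complex $C_\Sigma\oplus C_\Sigma[-1]\oplus\mathsf R$ with $C_\Sigma=C[-2]\oplus\mathsf R[-1]$ and differential, with respect to the ordered summands $C[-2],\mathsf R[-1],C[-3],\mathsf R[-2],\mathsf R$, $\begin{pmatrix} d&-\delta_2&0&0&0\\ 0&-r&0&0&0\\ v&0&-d&\delta_2&v\delta_2\\ \delta_1&0&0&r&\delta_1\delta_2\\ 0&1&0&0&r\end{pmatrix}$ (the entry $1$ is the identity $\mathsf R[-1]\to\mathsf R$). *)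

theory Defs
  imports Main "HOL-Library.Function_Algebras" "HOL-Library.Product_Plus"
begin

text \<open>Finitely generated free graded R-modules are given by a rank function
  n :: int => nat (finite support); the degree-j part is R^(n j), represented
  by coordinate vectors nat => R vanishing from index n j on.\<close>

type_synonym 'a vec = "nat \<Rightarrow> 'a"

definition fvec :: "(int \<Rightarrow> nat) \<Rightarrow> int \<Rightarrow> ('a::zero) vec set" where
  "fvec n j = {x. \<forall>i\<ge>n j. x i = 0}"

definition fg_free_graded :: "(int \<Rightarrow> nat) \<Rightarrow> bool" where
  "fg_free_graded n \<longleftrightarrow> finite {j. n j \<noteq> 0}"

definition vsmult :: "'a::times \<Rightarrow> 'a vec \<Rightarrow> 'a vec" where
  "vsmult c x = (\<lambda>i. c * x i)"

definition graded_map ::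
  "(int \<Rightarrow> nat) \<Rightarrow> (int \<Rightarrow> nat) \<Rightarrow> int \<Rightarrow> (int \<Rightarrow> ('a::comm_ring_1) vec \<Rightarrow> 'a vec) \<Rightarrow> bool" where
  "graded_map n m k f \<longleftrightarrow>
     (\<forall>j. \<forall>x\<in>fvec n j. f j x \<in> fvec m (j + k)) \<and>
     (\<forall>j. \<forall>x\<in>fvec n j. \<forall>y\<in>fvec n j. f j (x + y) = f j x + f j y) \<and>
     (\<forall>j c. \<forall>x\<in>fvec n j. f j (vsmult c x) = vsmult c (f j x))"

definition is_chain_complex :: "(int \<Rightarrow> 'm set) \<Rightarrow> (int \<Rightarrow> 'm \<Rightarrow> 'm::ab_group_add) \<Rightarrow> bool" where
  "is_chain_complex M D \<longleftrightarrow>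
     (\<forall>j. \<forall>x\<in>M j. D j x \<in> M (j - 1)) \<and> (\<forall>j. \<forall>x\<in>M j. D (j - 1) (D j x) = 0)"

definition cycles :: "(int \<Rightarrow> 'm set) \<Rightarrow> (int \<Rightarrow> 'm \<Rightarrow> 'm::ab_group_add) \<Rightarrow> int \<Rightarrow> 'm set" where
  "cycles M D j = {x \<in> M j. D j x = 0}"

definition boundaries :: "(int \<Rightarrow> 'm set) \<Rightarrow> (int \<Rightarrow> 'm \<Rightarrow> 'm::ab_group_add) \<Rightarrow> int \<Rightarrow> 'm set" where
  "boundaries M D j = D (j + 1) ` M (j + 1)"

text \<open>H_j(M) = cycles/boundaries is isomorphic as R-module to H_k(N): there is an
  R-linear map on cycles, sending cycles to cycles and boundaries to boundaries,
  whose induced map on the quotients is surjective and injective.\<close>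
definition homology_iso ::
  "(int \<Rightarrow> 'm set) \<Rightarrow> (int \<Rightarrow> 'm \<Rightarrow> 'm::ab_group_add) \<Rightarrow> ('a \<Rightarrow> 'm \<Rightarrow> 'm) \<Rightarrow> int \<Rightarrow>
   (int \<Rightarrow> 'n set) \<Rightarrow> (int \<Rightarrow> 'n \<Rightarrow> 'n::ab_group_add) \<Rightarrow> ('a \<Rightarrow> 'n \<Rightarrow> 'n) \<Rightarrow> int \<Rightarrow> bool" where
  "homology_iso M D S j N E T k \<longleftrightarrow>
     (\<exists>f :: 'm \<Rightarrow> 'n.
        (\<forall>x\<in>cycles M D j. \<forall>y\<in>cycles M D j. f (x + y) = f x + f y) \<and>
        (\<forall>c. \<forall>x\<in>cycles M D j. f (S c x) = T c (f x)) \<and>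
        f ` cycles M D j \<subseteq> cycles N E k \<and>
        f ` boundaries M D j \<subseteq> boundaries N E k \<and>
        (\<forall>z'\<in>cycles N E k. \<exists>z\<in>cycles M D j. f z - z' \<in> boundaries N E k) \<and>
        (\<forall>z\<in>cycles M D j. f z \<in> boundaries N E k \<longrightarrow> z \<in> boundaries M D j))"

text \<open>The S-complex C~ = C (+) C[-1] (+) R~, with C[-1]_j = C_(j-1); elements (x,y,z).
  Blocks: d : C_j -> C_(j-1), v : C_j -> C_(j-2), delta1 : C_j -> R~_(j-1),
  delta2 : R~_j -> C_(j-2), r : R~_j -> R~_(j-1).\<close>

definition St_carrier :: "(int \<Rightarrow> nat) \<Rightarrow> (int \<Rightarrow> nat) \<Rightarrow> int \<Rightarrow> (('a::zero) vec \<times> 'a vec \<times> 'a vec) set" where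
  "St_carrier nC nR j = fvec nC j \<times> fvec nC (j - 1) \<times> fvec nR j"

definition St_diff ::
  "(int \<Rightarrow> ('a::comm_ring_1) vec \<Rightarrow> 'a vec) \<Rightarrow> (int \<Rightarrow> 'a vec \<Rightarrow> 'a vec) \<Rightarrow> (int \<Rightarrow> 'a vec \<Rightarrow> 'a vec) \<Rightarrow>
   (int \<Rightarrow> 'a vec \<Rightarrow> 'a vec) \<Rightarrow> (int \<Rightarrow> 'a vec \<Rightarrow> 'a vec) \<Rightarrow> int \<Rightarrow>
   ('a vec \<times> 'a vec \<times> 'a vec) \<Rightarrow> ('a vec \<times> 'a vec \<times> 'a vec)" where
  "St_diff d v delta1 delta2 r j = (\<lambda>(x, y, z).
     (d j x, v j x - d (j - 1) y + delta2 j z, delta1 j x + r j z))"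

definition St_smult :: "'a::comm_ring_1 \<Rightarrow> ('a vec \<times> 'a vec \<times> 'a vec) \<Rightarrow> ('a vec \<times> 'a vec \<times> 'a vec)" where
  "St_smult c = (\<lambda>(x, y, z). (vsmult c x, vsmult c y, vsmult c z))"

definition S_complex ::
  "(int \<Rightarrow> nat) \<Rightarrow> (int \<Rightarrow> nat) \<Rightarrow>
   (int \<Rightarrow> ('a::comm_ring_1) vec \<Rightarrow> 'a vec) \<Rightarrow> (int \<Rightarrow> 'a vec \<Rightarrow> 'a vec) \<Rightarrow> (int \<Rightarrow> 'a vec \<Rightarrow> 'a vec) \<Rightarrow>
   (int \<Rightarrow> 'a vec \<Rightarrow> 'a vec) \<Rightarrow> (int \<Rightarrow> 'a vec \<Rightarrow> 'a vec) \<Rightarrow> bool" where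
  "S_complex nC nR d v delta1 delta2 r \<longleftrightarrow>
     fg_free_graded nC \<and> fg_free_graded nR \<and>
     graded_map nC nC (-1) d \<and> graded_map nC nC (-2) v \<and>
     graded_map nC nR (-1) delta1 \<and> graded_map nR nC (-2) delta2 \<and>
     graded_map nR nR (-1) r \<and>
     is_chain_complex (St_carrier nC nR) (St_diff d v delta1 delta2 r)"

text \<open>The suspension: C_Sigma = C[-2] (+) R~[-1], Sigma C~ = C_Sigma (+) C_Sigma[-1] (+) R~.
  Elements ((a,b),(c,e),z) with a in C_(j-2), b in R~_(j-1), c in C_(j-3), e in R~_(j-2),
  z in R~_j.\<close>

definition Sigma_carrier :: "(int \<Rightarrow> nat) \<Rightarrow> (int \<Rightarrow> nat) \<Rightarrow> int \<Rightarrow>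
   ((('a::zero) vec \<times> 'a vec) \<times> ('a vec \<times> 'a vec) \<times> 'a vec) set" where
  "Sigma_carrier nC nR j =
     (fvec nC (j - 2) \<times> fvec nR (j - 1)) \<times> (fvec nC (j - 3) \<times> fvec nR (j - 2)) \<times> fvec nR j"

definition Sigma_diff ::
  "(int \<Rightarrow> ('a::comm_ring_1) vec \<Rightarrow> 'a vec) \<Rightarrow> (int \<Rightarrow> 'a vec \<Rightarrow> 'a vec) \<Rightarrow> (int \<Rightarrow> 'a vec \<Rightarrow> 'a vec) \<Rightarrow>
   (int \<Rightarrow> 'a vec \<Rightarrow> 'a vec) \<Rightarrow> (int \<Rightarrow> 'a vec \<Rightarrow> 'a vec) \<Rightarrow> int \<Rightarrow>
   (('a vec \<times> 'a vec) \<times> ('a vec \<times> 'a vec) \<times> 'a vec) \<Rightarrow> (('a vec \<times> 'a vec) \<times> ('a vec \<times> 'a vec) \<times> 'a vec)" where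
  "Sigma_diff d v delta1 delta2 r j = (\<lambda>((a, b), (c, e), z).
     ((d (j - 2) a - delta2 (j - 1) b, - r (j - 1) b),
      (v (j - 2) a - d (j - 3) c + delta2 (j - 2) e + v (j - 2) (delta2 j z),
       delta1 (j - 2) a + r (j - 2) e + delta1 (j - 2) (delta2 j z)),
      b + r j z))"

definition Sigma_smult :: "'a::comm_ring_1 \<Rightarrow> (('a vec \<times> 'a vec) \<times> ('a vec \<times> 'a vec) \<times> 'a vec) \<Rightarrow>
   (('a vec \<times> 'a vec) \<times> ('a vec \<times> 'a vec) \<times> 'a vec)" where
  "Sigma_smult c = (\<lambda>((a, b), (e1, e2), z).
     ((vsmult c a, vsmult c b), (vsmult c e1, vsmult c e2), vsmult c z))"

end

theory Submission
  imports Defs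
begin

lemma fvec_zero[simp]: "0 \<in> fvec n j"
  by (simp add: fvec_def)

lemma fvec_add: "x \<in> (fvec n j :: ('a::comm_ring_1) vec set) \<Longrightarrow> y \<in> fvec n j \<Longrightarrow> x + y \<in> fvec n j"
  by (simp add: fvec_def)

lemma fvec_uminus: "x \<in> (fvec n j :: ('a::comm_ring_1) vec set) \<Longrightarrow> - x \<in> fvec n j"
  by (simp add: fvec_def)

lemma gm_closed: "graded_map n m k f \<Longrightarrow> x \<in> fvec n j \<Longrightarrow> f j x \<in> fvec m (j + k)"
  by (simp add: graded_map_def)

lemma gm_add: "graded_map n m k f \<Longrightarrow> x \<in> fvec n j \<Longrightarrow> y \<in> fvec n j \<Longrightarrow> f j (x + y) = f j x + f j y"
  by (simp add: graded_map_def)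

lemma gm_zero: "graded_map n m k f \<Longrightarrow> f j 0 = 0"
  using gm_add[of n m k f 0 j 0] by simp

lemma gm_uminus: "graded_map n m k f \<Longrightarrow> x \<in> fvec n j \<Longrightarrow> f j (- x) = - f j x"
proof -
  assume a: "graded_map n m k f" "x \<in> fvec n j"
  have "f j x + f j (- x) = 0"
    using gm_add[OF a(1) a(2) fvec_uminus[OF a(2)]] gm_zero[OF a(1), of j] by simp
  thus ?thesis by (metis add.inverse_unique)
qed

lemma gm_diff: "graded_map n m k f \<Longrightarrow> x \<in> fvec n j \<Longrightarrow> y \<in> fvec n j \<Longrightarrow> f j (x - y) = f j x - f j y"
  using gm_add[of n m k f x j "- y"] gm_uminus[of n m k f y j] fvec_uminus[of y n j]
  by simp

lemma gm_smult: "graded_map n m k f \<Longrightarrow> x \<in> fvec n j \<Longrightarrow> f j (vsmult c x) = vsmult c (f j x)"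
  by (simp add: graded_map_def)

lemma vsmult_add: "vsmult (c::'a::comm_ring_1) (x + y) = vsmult c x + vsmult c y"
  by (simp add: vsmult_def fun_eq_iff distrib_left)

lemma fvec_vsmult: "x \<in> fvec n j \<Longrightarrow> vsmult (c::'a::comm_ring_1) x \<in> fvec n j"
  by (simp add: fvec_def vsmult_def)

lemma S_rels:
  assumes S: "S_complex nC nR d v delta1 delta2 r" and z: "z \<in> fvec nR j"
  shows "d (j - 2) (delta2 j z) = delta2 (j - 1) (r j z)" and "r (j - 1) (r j z) = 0"
proof -
  from S have gd: "graded_map nC nC (-1) d" and gv: "graded_map nC nC (-2) v"
    and g1: "graded_map nC nR (-1) delta1" and g2: "graded_map nR nC (-2) delta2"
    and gr: "graded_map nR nR (-1) r"
    and cc: "is_chain_complex (St_carrier nC nR) (St_diff d v delta1 delta2 r)"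
    by (auto simp: S_complex_def)
  have mem: "(0, 0, z) \<in> St_carrier nC nR j" using z by (simp add: St_carrier_def)
  have e1: "St_diff d v delta1 delta2 r j (0, 0, z) = (0, delta2 j z, r j z)"
    by (simp add: St_diff_def gm_zero[OF gd] gm_zero[OF gv] gm_zero[OF g1])
  have "St_diff d v delta1 delta2 r (j - 1) (St_diff d v delta1 delta2 r j (0, 0, z)) = 0"
    using cc mem by (simp add: is_chain_complex_def)
  hence "St_diff d v delta1 delta2 r (j - 1) (0, delta2 j z, r j z) = 0" using e1 by simp
  hence "- d (j - 1 - 1) (delta2 j z) + delta2 (j - 1) (r j z) = 0 \<and> r (j - 1) (r j z) = 0"
    by (simp add: St_diff_def gm_zero[OF gd] gm_zero[OF gv] gm_zero[OF g1] zero_prod_def)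
  thus "d (j - 2) (delta2 j z) = delta2 (j - 1) (r j z)" and "r (j - 1) (r j z) = 0"
    by (simp_all add: neg_eq_iff_add_eq_0[symmetric] add.commute eq_neg_iff_add_eq_0[symmetric])
qed

theorem proposition2p10:
  fixes nC nR :: "int \<Rightarrow> nat"
    and d v delta1 delta2 r :: "int \<Rightarrow> ('a::comm_ring_1) vec \<Rightarrow> 'a vec"
  assumes "S_complex nC nR d v delta1 delta2 r"
  shows "\<forall>j. homology_iso
           (Sigma_carrier nC nR) (Sigma_diff d v delta1 delta2 r) Sigma_smult j
           (St_carrier nC nR) (St_diff d v delta1 delta2 r) St_smult (j - 2)"
proof
  fix j :: int
  note S = assms
  from S have gd: "graded_map nC nC (-1) d" and gv: "graded_map nC nC (-2) v"
    and g1: "graded_map nC nR (-1) delta1" and g2: "graded_map nR nC (-2) delta2"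
    and gr: "graded_map nR nR (-1) r"
    by (auto simp: S_complex_def)
  note Z = gm_zero[OF gd] gm_zero[OF gv] gm_zero[OF g1] gm_zero[OF g2] gm_zero[OF gr]
  define f :: "('a vec \<times> 'a vec) \<times> ('a vec \<times> 'a vec) \<times> 'a vec \<Rightarrow> 'a vec \<times> 'a vec \<times> 'a vec"
    where "f = (\<lambda>((a, b), (c, e), z). (a + delta2 j z, c, e))"
  let ?M = "Sigma_carrier nC nR" and ?D = "Sigma_diff d v delta1 delta2 r"
  let ?N = "St_carrier nC nR" and ?E = "St_diff d v delta1 delta2 r"
  have f_simp: "f ((a, b), (c, e), z) = (a + delta2 j z, c, e)" for a b c e z
    by (simp add: f_def)
  have cyc: "P ((a, b), (c, e), z)" if "((a, b), (c, e), z) \<in> cycles ?M ?D j"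
     "\<And>a b c e z. a \<in> fvec nC (j - 2) \<Longrightarrow> b \<in> fvec nR (j - 1) \<Longrightarrow> c \<in> fvec nC (j - 3)
        \<Longrightarrow> e \<in> fvec nR (j - 2) \<Longrightarrow> z \<in> fvec nR j
        \<Longrightarrow> d (j - 2) a - delta2 (j - 1) b = 0 \<Longrightarrow> r (j - 1) b = 0
        \<Longrightarrow> v (j - 2) a - d (j - 3) c + delta2 (j - 2) e + v (j - 2) (delta2 j z) = 0
        \<Longrightarrow> delta1 (j - 2) a + r (j - 2) e + delta1 (j - 2) (delta2 j z) = 0
        \<Longrightarrow> b + r j z = 0 \<Longrightarrow> P ((a, b), (c, e), z)" for P a b c e z
    using that by (simp add: cycles_def Sigma_carrier_def Sigma_diff_def zero_prod_def)
  show "homology_iso ?M ?D Sigma_smult j ?N ?E St_smult (j - 2)"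
    unfolding homology_iso_def
  proof (intro exI[of _ f] conjI ballI allI impI subsetI)
    fix X Y assume X: "X \<in> cycles ?M ?D j" and Y: "Y \<in> cycles ?M ?D j"
    obtain a b c e z where Xe: "X = ((a, b), (c, e), z)" by (metis prod.exhaust)
    obtain a' b' c' e' z' where Ye: "Y = ((a', b'), (c', e'), z')" by (metis prod.exhaust)
    have "z \<in> fvec nR j" "z' \<in> fvec nR j" using X Y
      by (auto simp: Xe Ye cycles_def Sigma_carrier_def)
    thus "f (X + Y) = f X + f Y"
      by (simp add: Xe Ye f_simp gm_add[OF g2] algebra_simps)
  next
    fix c X assume X: "X \<in> cycles ?M ?D j"
    obtain a b c' e z where Xe: "X = ((a, b), (c', e), z)" by (metis prod.exhaust)
    have "z \<in> fvec nR j" using X by (auto simp: Xe cycles_def Sigma_carrier_def)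
    thus "f (Sigma_smult c X) = St_smult c (f X)"
      by (simp add: Xe f_simp Sigma_smult_def St_smult_def gm_smult[OF g2] vsmult_add)
  next
    fix W assume "W \<in> f ` cycles ?M ?D j"
    then obtain X where X: "X \<in> cycles ?M ?D j" and W: "W = f X" by blast
    obtain a b c e z where Xe: "X = ((a, b), (c, e), z)" by (metis prod.exhaust)
    show "W \<in> cycles ?N ?E (j - 2)"
      using X unfolding Xe W
    proof (rule cyc)
      fix a b c e z
      assume a: "a \<in> fvec nC (j - 2)" and b: "b \<in> fvec nR (j - 1)" and c: "c \<in> fvec nC (j - 3)"
        and e: "e \<in> fvec nR (j - 2)" and z: "z \<in> fvec nR j"
        and h1: "d (j - 2) a - delta2 (j - 1) b = 0" and h2: "r (j - 1) b = 0"
        and h3: "v (j - 2) a - d (j - 3) c + delta2 (j - 2) e + v (j - 2) (delta2 j z) = 0"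
        and h4: "delta1 (j - 2) a + r (j - 2) e + delta1 (j - 2) (delta2 j z) = 0"
        and h5: "b + r j z = 0"
      have z2: "delta2 j z \<in> fvec nC (j - 2)" using gm_closed[OF g2 z] by simp
      have bz: "b = - r j z" using h5 by (simp add: eq_neg_iff_add_eq_0)
      have rz: "r j z \<in> fvec nR (j - 1)" using gm_closed[OF gr z] by simp
      have "d (j - 2) (a + delta2 j z) = 0"
        using h1 S_rels(1)[OF S z] gm_add[OF gd a z2] bz gm_uminus[OF g2 rz] by simp
      moreover have "v (j - 2) (a + delta2 j z) - d (j - 2 - 1) c + delta2 (j - 2) e = 0"
        using h3 gm_add[OF gv a z2] by (simp add: algebra_simps)
      moreover have "delta1 (j - 2) (a + delta2 j z) + r (j - 2) e = 0"
        using h4 gm_add[OF g1 a z2] by (simp add: algebra_simps)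
      moreover have "a + delta2 j z \<in> fvec nC (j - 2)" using fvec_add[OF a z2] .
      ultimately show "f ((a, b), (c, e), z) \<in> cycles ?N ?E (j - 2)"
        using c e by (simp add: f_simp cycles_def St_carrier_def St_diff_def zero_prod_def
           diff_diff_eq)
    qed
  next
    fix W assume "W \<in> f ` boundaries ?M ?D j"
    then obtain X where X: "X \<in> ?M (j + 1)" and W: "W = f (?D (j + 1) X)"
      by (auto simp: boundaries_def)
    obtain a b c e z where Xe: "X = ((a, b), (c, e), z)" by (metis prod.exhaust)
    have a: "a \<in> fvec nC (j - 1)" and b: "b \<in> fvec nR j" and c: "c \<in> fvec nC (j - 2)"
      and e: "e \<in> fvec nR (j - 1)" and z: "z \<in> fvec nR (j + 1)"
      using X by (auto simp: Xe Sigma_carrier_def)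
    have z2: "delta2 (j + 1) z \<in> fvec nC (j - 1)" using gm_closed[OF g2 z] by simp
    have rz: "r (j + 1) z \<in> fvec nR j" using gm_closed[OF gr z] by simp
    have db: "delta2 j b \<in> fvec nC (j - 2)" using gm_closed[OF g2 b] by simp
    have rel: "d (j - 1) (delta2 (j + 1) z) = delta2 j (r (j + 1) z)"
      using S_rels(1)[OF S z] by simp
    have "?D (j + 1) X = ((d (j - 1) a - delta2 j b, - r j b),
      (v (j - 1) a - d (j - 2) c + delta2 (j - 1) e + v (j - 1) (delta2 (j + 1) z),
       delta1 (j - 1) a + r (j - 1) e + delta1 (j - 1) (delta2 (j + 1) z)),
      b + r (j + 1) z)"
      by (simp add: Xe Sigma_diff_def)
    hence "W = (d (j - 1) a - delta2 j b + delta2 j (b + r (j + 1) z),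
      v (j - 1) a - d (j - 2) c + delta2 (j - 1) e + v (j - 1) (delta2 (j + 1) z),
       delta1 (j - 1) a + r (j - 1) e + delta1 (j - 1) (delta2 (j + 1) z))"
      by (simp add: W f_simp)
    also have "\<dots> = ?E (j - 1) (a + delta2 (j + 1) z, c, e)"
      by (simp add: St_diff_def gm_add[OF g2 b rz] gm_add[OF gd a z2] gm_add[OF gv a z2]
          gm_add[OF g1 a z2] rel)
    finally have "W = ?E (j - 1) (a + delta2 (j + 1) z, c, e)" .
    moreover have "(a + delta2 (j + 1) z, c, e) \<in> ?N (j - 1)"
      using fvec_add[OF a z2] c e by (simp add: St_carrier_def)
    ultimately show "W \<in> boundaries ?N ?E (j - 2)"
      by (auto simp: boundaries_def)
  next
    fix W assume W: "W \<in> cycles ?N ?E (j - 2)"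
    obtain x y w where We: "W = (x, y, w)" by (metis prod.exhaust)
    have x: "x \<in> fvec nC (j - 2)" and y: "y \<in> fvec nC (j - 3)" and w: "w \<in> fvec nR (j - 2)"
      and h1: "d (j - 2) x = 0" and h2: "v (j - 2) x - d (j - 3) y + delta2 (j - 2) w = 0"
      and h3: "delta1 (j - 2) x + r (j - 2) w = 0"
      using W by (auto simp: We cycles_def St_carrier_def St_diff_def zero_prod_def diff_diff_eq)
    have "((x, 0), (y, w), 0) \<in> cycles ?M ?D j"
      using x y w h1 h2 h3 by (simp add: cycles_def Sigma_carrier_def Sigma_diff_def Z zero_prod_def)
    moreover have "f ((x, 0), (y, w), 0) - W \<in> boundaries ?N ?E (j - 2)"
    proof -
      have "(0, 0, 0) \<in> ?N (j - 2 + 1)" by (simp add: St_carrier_def)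
      moreover have "?E (j - 2 + 1) (0, 0, 0) = 0" by (simp add: St_diff_def Z zero_prod_def)
      ultimately have "0 \<in> boundaries ?N ?E (j - 2)" unfolding boundaries_def
        by (metis image_eqI)
      thus ?thesis by (simp add: f_simp We Z)
    qed
    ultimately show "\<exists>X\<in>cycles ?M ?D j. f X - W \<in> boundaries ?N ?E (j - 2)" by blast
  next
    fix X assume X: "X \<in> cycles ?M ?D j" and B: "f X \<in> boundaries ?N ?E (j - 2)"
    obtain a b c e z where Xe: "X = ((a, b), (c, e), z)" by (metis prod.exhaust)
    have a: "a \<in> fvec nC (j - 2)" and b: "b \<in> fvec nR (j - 1)" and c: "c \<in> fvec nC (j - 3)"
      and e: "e \<in> fvec nR (j - 2)" and z: "z \<in> fvec nR j"
      and h5: "b + r j z = 0" and h2: "r (j - 1) b = 0"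
      using X by (auto simp: Xe cycles_def Sigma_carrier_def Sigma_diff_def zero_prod_def)
    from B obtain Y where Y: "Y \<in> ?N (j - 1)" and fY: "f X = ?E (j - 1) Y"
      by (auto simp: boundaries_def)
    obtain x y w where Ye: "Y = (x, y, w)" by (metis prod.exhaust)
    have x: "x \<in> fvec nC (j - 1)" and y: "y \<in> fvec nC (j - 2)" and w: "w \<in> fvec nR (j - 1)"
      using Y by (auto simp: Ye St_carrier_def)
    have k1: "a + delta2 j z = d (j - 1) x" and k2: "c = v (j - 1) x - d (j - 2) y + delta2 (j - 1) w"
      and k3: "e = delta1 (j - 1) x + r (j - 1) w"
      using fY by (auto simp: Xe Ye f_simp St_diff_def)
    have bz: "b = - r j z" using h5 by (simp add: eq_neg_iff_add_eq_0)
    have "((x, z), (y, w), 0) \<in> ?M (j + 1)"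
      using x y w z by (simp add: Sigma_carrier_def)
    moreover have "?D (j + 1) ((x, z), (y, w), 0) = X"
      using k1 k2 k3 bz h2
      by (simp add: Xe Sigma_diff_def Z algebra_simps)
    ultimately show "X \<in> boundaries ?M ?D j"
      unfolding boundaries_def by (metis image_eqI)
  qed
qed

end
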